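(* Let $\Bbbk$ be a field with $\mathrm{char}(\Bbbk)\ne2$, $n\ge2$, $\mathbb{H}_{2^n}$ the Nichols Hopf algebra and $A$ a unital associative $\Bbbk$-algebra. Let $\cdot:\mathbb{H}_{2^n}\otimes A\to A$ be a linear map such that $1\cdot a=a$ and $g\cdot a=0$ for all $a\in A$, $x_i\cdot1_A\in Z(A)$ for all $i\in\{1,\dots,n-1\}$, and for all $a\in A$: $gx_i\cdot a=x_i\cdot a=(x_i\cdot1_A)a$ for $i\in\{1,\dots,n-1\}$, and $gx_{i_1}\cdots x_{i_s}\cdot a=x_{i_1}\cdots x_{i_s}\cdot a=0$ for all $s\ge2$, $i_1,\dots,i_s\in\{1,\dots,n-1\}$. Then $\cdot$ is a partial action of $\mathbb{H}_{2^n}$ on $A$.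
   Context: $\mathbb{H}_{2^n}$ is the Hopf algebra generated by $g,x_1,\dots,x_{n-1}$ with relations $g^2=1$, $x_i^2=0$, $x_ig=-gx_i$, $x_ix_j=-x_jx_i$, basis $\{g^{j_0}x_1^{j_1}\cdots x_{n-1}^{j_{n-1}}:j_i\in\{0,1\}\}$, $g$ group-like, $\Delta(x_i)=x_i\otimes1+g\otimes x_i$, $\varepsilon(x_i)=0$. $Z(A)$ is the center of $A$. A partial action of a bialgebra $H$ on $A$ is a linear map $\cdot:H\otimes A\to A$ with $1_H\cdot a=a$, $h\cdot(ab)=(h_1\cdot a)(h_2\cdot b)$, $h\cdot(k\cdot a)=(h_1\cdot1_A)(h_2k\cdot a)$. *)

theory Defs
  imports Main
begin

definition is_algebra :: "('k::field \<Rightarrow> 'a::ring_1 \<Rightarrow> 'a) \<Rightarrow> bool" where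
  "is_algebra scale \<longleftrightarrow>
     (\<forall>c x y. scale c (x + y) = scale c x + scale c y) \<and>
     (\<forall>c d x. scale (c + d) x = scale c x + scale d x) \<and>
     (\<forall>c d x. scale c (scale d x) = scale (c * d) x) \<and>
     (\<forall>x. scale 1 x = x) \<and>
     (\<forall>c x y. scale c (x * y) = scale c x * y) \<and>
     (\<forall>c x y. scale c (x * y) = x * scale c y)"

text \<open>Basis of the Nichols Hopf algebra H_{2^n}: the pair (b, S) stands for
  g^b x_{i_1} ... x_{i_s} with S = {i_1 < ... < i_s} a subset of {1..n-1}.\<close>

type_synonym hbasis = "bool \<times> nat set"

definition Hbasis :: "nat \<Rightarrow> hbasis set" where
  "Hbasis n = {(b, S). S \<subseteq> {1..<n}}"

definition Hspace :: "nat \<Rightarrow> (hbasis \<Rightarrow> 'k::field) set" where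
  "Hspace n = {h. \<forall>r. r \<notin> Hbasis n \<longrightarrow> h r = 0}"

definition He :: "hbasis \<Rightarrow> hbasis \<Rightarrow> 'k::field" where
  "He p = (\<lambda>r. if r = p then 1 else 0)"

text \<open>Structure constants: (g^b x_S)(g^c x_T) = (-1)^(c|S|) g^(b+c) x_S x_T, and
  x_S x_T = 0 if S, T intersect, else (-1)^(#{(s,t) in S x T. t < s}) x_(S \<union> T).\<close>

definition Hcoef :: "hbasis \<Rightarrow> hbasis \<Rightarrow> hbasis \<Rightarrow> 'k::field" where
  "Hcoef p q r = (case p of (b, S) \<Rightarrow> case q of (c, T) \<Rightarrow>
     if S \<inter> T = {} \<and> r = (b \<noteq> c, S \<union> T)
     then (-1) ^ (of_bool c * card S + card {(s, t). s \<in> S \<and> t \<in> T \<and> t < s})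
     else 0)"

definition Hmul :: "nat \<Rightarrow> (hbasis \<Rightarrow> 'k::field) \<Rightarrow> (hbasis \<Rightarrow> 'k) \<Rightarrow> hbasis \<Rightarrow> 'k" where
  "Hmul n h k = (\<lambda>r. \<Sum>p\<in>Hbasis n. \<Sum>q\<in>Hbasis n. h p * k q * Hcoef p q r)"

definition Hone :: "hbasis \<Rightarrow> 'k::field" where "Hone = He (False, {})"
definition Hg :: "hbasis \<Rightarrow> 'k::field" where "Hg = He (True, {})"
definition Hx :: "nat \<Rightarrow> hbasis \<Rightarrow> 'k::field" where "Hx i = He (False, {i})"

definition Hprod :: "nat \<Rightarrow> (hbasis \<Rightarrow> 'k::field) list \<Rightarrow> hbasis \<Rightarrow> 'k" where
  "Hprod n hs = foldl (Hmul n) Hone hs"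

text \<open>The tensor square H \<otimes> H with the tensor product algebra structure
  (a \<otimes> b)(c \<otimes> d) = ac \<otimes> bd.\<close>

definition Tmul :: "nat \<Rightarrow> (hbasis \<times> hbasis \<Rightarrow> 'k::field) \<Rightarrow> (hbasis \<times> hbasis \<Rightarrow> 'k)
    \<Rightarrow> hbasis \<times> hbasis \<Rightarrow> 'k" where
  "Tmul n u v = (\<lambda>(r1, r2). \<Sum>p1\<in>Hbasis n. \<Sum>p2\<in>Hbasis n. \<Sum>q1\<in>Hbasis n. \<Sum>q2\<in>Hbasis n.
      u (p1, p2) * v (q1, q2) * Hcoef p1 q1 r1 * Hcoef p2 q2 r2)"

definition Tpure :: "(hbasis \<Rightarrow> 'k::field) \<Rightarrow> (hbasis \<Rightarrow> 'k) \<Rightarrow> hbasis \<times> hbasis \<Rightarrow> 'k" where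
  "Tpure h k = (\<lambda>(p, q). h p * k q)"

definition Tplus :: "(hbasis \<times> hbasis \<Rightarrow> 'k::field) \<Rightarrow> (hbasis \<times> hbasis \<Rightarrow> 'k) \<Rightarrow> hbasis \<times> hbasis \<Rightarrow> 'k" where
  "Tplus u v = (\<lambda>r. u r + v r)"

text \<open>Comultiplication: Delta(g) = g \<otimes> g, Delta(x_i) = x_i \<otimes> 1 + g \<otimes> x_i,
  extended multiplicatively: Delta(g^b x_{i_1}...x_{i_s}) = Delta(g)^b Delta(x_{i_1})...Delta(x_{i_s}),
  then linearly.\<close>

definition Delta_basis :: "nat \<Rightarrow> hbasis \<Rightarrow> hbasis \<times> hbasis \<Rightarrow> 'k::field" where
  "Delta_basis n p = (case p of (b, S) \<Rightarrow>
     foldl (Tmul n) (if b then Tpure Hg Hg else Tpure Hone Hone)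
       (map (\<lambda>i. Tplus (Tpure (Hx i) Hone) (Tpure Hg (Hx i))) (sorted_list_of_set S)))"

definition Delta :: "nat \<Rightarrow> (hbasis \<Rightarrow> 'k::field) \<Rightarrow> hbasis \<times> hbasis \<Rightarrow> 'k" where
  "Delta n h = (\<lambda>pq. \<Sum>p\<in>Hbasis n. h p * Delta_basis n p pq)"

text \<open>A linear map H \<otimes> A \<rightarrow> A is given by linear maps phi p : A \<rightarrow> A on basis elements p;
  act n scale phi h a is its value on h \<otimes> a.\<close>

definition act :: "nat \<Rightarrow> ('k::field \<Rightarrow> 'a::ring_1 \<Rightarrow> 'a) \<Rightarrow> (hbasis \<Rightarrow> 'a \<Rightarrow> 'a)
    \<Rightarrow> (hbasis \<Rightarrow> 'k) \<Rightarrow> 'a \<Rightarrow> 'a" where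
  "act n scale phi h a = (\<Sum>p\<in>Hbasis n. scale (h p) (phi p a))"

definition linear_map_HA :: "nat \<Rightarrow> ('k::field \<Rightarrow> 'a::ring_1 \<Rightarrow> 'a) \<Rightarrow> (hbasis \<Rightarrow> 'a \<Rightarrow> 'a) \<Rightarrow> bool" where
  "linear_map_HA n scale phi \<longleftrightarrow>
     (\<forall>p\<in>Hbasis n. (\<forall>x y. phi p (x + y) = phi p x + phi p y) \<and>
                    (\<forall>c x. phi p (scale c x) = scale c (phi p x)))"

text \<open>Partial action (Sweedler sums written out via the coefficients of Delta h).\<close>

definition partial_action :: "nat \<Rightarrow> ('k::field \<Rightarrow> 'a::ring_1 \<Rightarrow> 'a) \<Rightarrow> (hbasis \<Rightarrow> 'a \<Rightarrow> 'a) \<Rightarrow> bool" where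
  "partial_action n scale phi \<longleftrightarrow>
     linear_map_HA n scale phi \<and>
     (\<forall>a. act n scale phi Hone a = a) \<and>
     (\<forall>h\<in>Hspace n. \<forall>a b. act n scale phi h (a * b) =
        (\<Sum>p\<in>Hbasis n. \<Sum>q\<in>Hbasis n.
           scale (Delta n h (p, q)) (act n scale phi (He p) a * act n scale phi (He q) b))) \<and>
     (\<forall>h\<in>Hspace n. \<forall>k\<in>Hspace n. \<forall>a. act n scale phi h (act n scale phi k a) =
        (\<Sum>p\<in>Hbasis n. \<Sum>q\<in>Hbasis n.
           scale (Delta n h (p, q)) (act n scale phi (He p) 1 * act n scale phi (Hmul n (He q) k) a)))"

end

theory Submission
  imports Defs
begin


definition hm :: "hbasis \<Rightarrow> hbasis \<Rightarrow> hbasis" where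
  "hm p q = (fst p \<noteq> fst q, snd p \<union> snd q)"
definition hs :: "hbasis \<Rightarrow> hbasis \<Rightarrow> 'k::field" where
  "hs p q = (-1) ^ (of_bool (fst q) * card (snd p) + card {(s, t). s \<in> snd p \<and> t \<in> snd q \<and> t < s})"

lemma Hcoef_alt: "Hcoef p q r = (if snd p \<inter> snd q = {} \<and> r = hm p q then hs p q else 0)"
  by (cases p; cases q) (simp add: Hcoef_def hm_def hs_def)

lemma sum_single:
  assumes "finite A" "a \<in> A" "\<And>x. x \<in> A \<Longrightarrow> x \<noteq> a \<Longrightarrow> f x = 0"
  shows "sum f A = f a"
proof -
  have "sum f A = f a + sum f (A - {a})" using assms by (simp add: sum.remove)
  also have "sum f (A - {a}) = 0" using assms by (intro sum.neutral) auto
  finally show ?thesis by simp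
qed

lemma finite_Hbasis: "finite (Hbasis n)"
proof -
  have "Hbasis n = UNIV \<times> Pow {1..<n}" by (auto simp: Hbasis_def)
  then show ?thesis by simp
qed

lemma Hbasis_iff[simp]: "(b, S) \<in> Hbasis n \<longleftrightarrow> S \<subseteq> {1..<n}" by (simp add: Hbasis_def)

lemma sum_He: "finite A \<Longrightarrow> (\<Sum>x\<in>A. He p x * f x) = (if p \<in> A then f p else 0)"
proof -
  assume "finite A"
  have "(\<Sum>x\<in>A. He p x * f x) = (\<Sum>x\<in>A. if x = p then f x else 0)"
    by (rule sum.cong) (auto simp: He_def)
  then show ?thesis using \<open>finite A\<close> by (simp add: sum.delta)
qed

lemma pair_card_set[simp]: "{(s, t). s = i \<and> t = j \<and> t < s} = (if j < i then {(i, j)} else {})"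
  by auto

lemma Hmul_He: "p \<in> Hbasis n \<Longrightarrow> q \<in> Hbasis n \<Longrightarrow> Hmul n (He p) (He q) = Hcoef p q"
proof (rule ext)
  fix r assume a: "p \<in> Hbasis n" "q \<in> Hbasis n"
  have "Hmul n (He p) (He q) r = (\<Sum>p'\<in>Hbasis n. He p p' * (\<Sum>q'\<in>Hbasis n. He q q' * Hcoef p' q' r))"
    unfolding Hmul_def sum_distrib_left by (intro sum.cong refl) (simp add: ac_simps)
  then show "Hmul n (He p) (He q) r = Hcoef p q r" using a by (simp add: sum_He finite_Hbasis)
qed

lemma t1: "(hs (b, {}) (c, {i}) :: 'k::field) = 1" by (simp add: hs_def)
lemma t2: "(hs (b, {i}) (True, {}) :: 'k::field) = -1" by (simp add: hs_def)
lemma t3: "i < j \<Longrightarrow> (hs (b, {i}) (False, {j}) :: 'k::field) = 1" by (simp add: hs_def)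
lemma t4: "hm (b, {}) (False, {i}) = (b, {i})" by (simp add: hm_def)

definition ST :: "'k::field \<Rightarrow> hbasis \<Rightarrow> hbasis \<Rightarrow> hbasis \<times> hbasis \<Rightarrow> 'k" where
  "ST c p q = (\<lambda>x. if x = (p, q) then c else 0)"

lemma Tpure_He: "Tpure (He p) (He q) = ST 1 p q"
  by (rule ext) (auto simp: Tpure_def ST_def He_def split: if_splits)

lemma Tmul_ST_left:
  assumes "p1 \<in> Hbasis n" "p2 \<in> Hbasis n"
  shows "Tmul n (ST c p1 p2) v (r1, r2) =
    (\<Sum>z\<in>Hbasis n. \<Sum>w\<in>Hbasis n. c * v (z, w) * Hcoef p1 z r1 * Hcoef p2 w r2)"
proof -
  have "Tmul n (ST c p1 p2) v (r1, r2) = (\<Sum>y\<in>Hbasis n. \<Sum>z\<in>Hbasis n. \<Sum>w\<in>Hbasis n.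
      ST c p1 p2 (p1, y) * v (z, w) * Hcoef p1 z r1 * Hcoef y w r2)"
    unfolding Tmul_def split_conv by (rule sum_single) (auto simp: ST_def finite_Hbasis assms)
  also have "\<dots> = (\<Sum>z\<in>Hbasis n. \<Sum>w\<in>Hbasis n.
      ST c p1 p2 (p1, p2) * v (z, w) * Hcoef p1 z r1 * Hcoef p2 w r2)"
    by (rule sum_single) (auto simp: ST_def finite_Hbasis assms)
  finally show ?thesis by (simp add: ST_def)
qed

lemma Tmul_ST:
  assumes "p1 \<in> Hbasis n" "p2 \<in> Hbasis n" "q1 \<in> Hbasis n" "q2 \<in> Hbasis n"
  shows "Tmul n (ST c p1 p2) (ST d q1 q2) =
    (if snd p1 \<inter> snd q1 = {} \<and> snd p2 \<inter> snd q2 = {}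
     then ST (c * d * hs p1 q1 * hs p2 q2) (hm p1 q1) (hm p2 q2) else (\<lambda>_. 0))"
proof (rule ext, clarify)
  fix r1 r2
  have "Tmul n (ST c p1 p2) (ST d q1 q2) (r1, r2) = (\<Sum>w\<in>Hbasis n.
      c * ST d q1 q2 (q1, w) * Hcoef p1 q1 r1 * Hcoef p2 w r2)"
    unfolding Tmul_ST_left[OF assms(1,2)] by (rule sum_single) (auto simp: ST_def finite_Hbasis assms)
  also have "\<dots> = c * ST d q1 q2 (q1, q2) * Hcoef p1 q1 r1 * Hcoef p2 q2 r2"
    by (rule sum_single) (auto simp: ST_def finite_Hbasis assms)
  finally show "Tmul n (ST c p1 p2) (ST d q1 q2) (r1, r2) = (if snd p1 \<inter> snd q1 = {} \<and> snd p2 \<inter> snd q2 = {}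
     then ST (c * d * hs p1 q1 * hs p2 q2) (hm p1 q1) (hm p2 q2) else (\<lambda>_. 0)) (r1, r2)"
    by (auto simp: ST_def Hcoef_alt)
qed

lemma Tmul_Tplus_left: "Tmul n (Tplus u v) w = Tplus (Tmul n u w) (Tmul n v w)"
  by (rule ext) (simp add: Tmul_def Tplus_def algebra_simps sum.distrib split: prod.splits)
lemma Tmul_Tplus_right: "Tmul n w (Tplus u v) = Tplus (Tmul n w u) (Tmul n w v)"
  by (rule ext) (simp add: Tmul_def Tplus_def algebra_simps sum.distrib split: prod.splits)
lemma Tmul_zero_left: "Tmul n (\<lambda>_. 0) w = (\<lambda>_. 0)"
  by (rule ext) (simp add: Tmul_def split: prod.splits)
lemma Tmul_zero_right: "Tmul n w (\<lambda>_. 0) = (\<lambda>_. 0)"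
  by (rule ext) (simp add: Tmul_def split: prod.splits)
lemma Tplus_zero[simp]: "Tplus u (\<lambda>_. 0) = u" "Tplus (\<lambda>_. 0) u = u"
  by (auto simp: Tplus_def)

definition XX :: "nat \<Rightarrow> hbasis \<times> hbasis \<Rightarrow> 'k::field" where
  "XX i = Tplus (ST 1 (False, {i}) (False, {})) (ST 1 (True, {}) (False, {i}))"

lemma DB_alt: "Delta_basis n (b, S) = foldl (Tmul n) (ST 1 (b, {}) (b, {})) (map XX (sorted_list_of_set S))"
proof -
  have e1: "(if b then Tpure Hg Hg else Tpure Hone Hone) = (ST 1 (b, {}) (b, {}) :: _ \<Rightarrow> 'k::field)"
    by (simp add: Hg_def Hone_def Tpure_He)
  have e2: "(\<lambda>i. Tplus (Tpure (Hx i) Hone) (Tpure Hg (Hx i))) = (XX :: _ \<Rightarrow> _ \<Rightarrow> 'k::field)"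
    by (rule ext) (simp add: XX_def Hg_def Hone_def Hx_def Tpure_He)
  show ?thesis unfolding Delta_basis_def prod.case e1 e2 by (rule refl)
qed

lemma DB0: "Delta_basis n (b, {}) = ST 1 (b, {}) (b, {})"
  by (simp add: DB_alt)

lemma DB1: "i \<in> {1..<n} \<Longrightarrow>
  Delta_basis n (b, {i}) = Tplus (ST 1 (b, {i}) (b, {})) (ST 1 (\<not> b, {}) (b, {i}))"
  by (simp add: DB_alt XX_def Tmul_Tplus_left Tmul_Tplus_right Tmul_ST hm_def hs_def)

lemma sl2: "i < j \<Longrightarrow> sorted_list_of_set {i, j} = [i, (j::nat)]"
proof -
  assume "i < j"
  have "{i, j} = set [i, j]" by simp
  then show ?thesis using \<open>i < j\<close> by (simp only: sorted_list_of_set_sort_remdups) simp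
qed

lemma DB2: "i \<in> {1..<n} \<Longrightarrow> j \<in> {1..<n} \<Longrightarrow> i < j \<Longrightarrow>
  Delta_basis n (b, {i, j}) = Tplus (Tplus (ST 1 (b, {i, j}) (b, {})) (ST 1 (\<not> b, {j}) (b, {i})))
     (Tplus (ST (-1) (\<not> b, {i}) (b, {j})) (ST 1 (b, {}) (b, {i, j})))"
  by (simp add: DB_alt sl2 XX_def Tmul_Tplus_left Tmul_Tplus_right Tmul_ST hm_def hs_def insert_commute)

definition supp :: "nat \<Rightarrow> (hbasis \<times> hbasis \<Rightarrow> 'k::field) \<Rightarrow> bool" where
  "supp m u \<longleftrightarrow> (\<forall>r1 r2. u (r1, r2) \<noteq> 0 \<longrightarrow> card (snd r1) + card (snd r2) = m)"

lemma sum_nz: "sum f A \<noteq> 0 \<Longrightarrow> \<exists>x\<in>A. f x \<noteq> 0"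
  by (meson sum.neutral)

lemma finite_snd: "p \<in> Hbasis n \<Longrightarrow> finite (snd p)"
  by (cases p) (auto intro: finite_subset)

lemma Hcoef_nz: "Hcoef p q r \<noteq> 0 \<Longrightarrow> p \<in> Hbasis n \<Longrightarrow> q \<in> Hbasis n \<Longrightarrow>
   card (snd r) = card (snd p) + card (snd q)"
  by (auto simp: Hcoef_alt hm_def card_Un_disjoint finite_snd split: if_splits)

lemma Tmul_supp:
  fixes u v :: "hbasis \<times> hbasis \<Rightarrow> 'k::field"
  assumes u: "supp m u" and v: "supp m' v"
  shows "supp (m + m') (Tmul n u v)"
  unfolding supp_def
proof (intro allI impI)
  fix r1 r2 assume "Tmul n u v (r1, r2) \<noteq> 0"
  then obtain p1 p2 q1 q2 where mem: "p1 \<in> Hbasis n" "p2 \<in> Hbasis n" "q1 \<in> Hbasis n" "q2 \<in> Hbasis n"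
    and nz: "u (p1, p2) * v (q1, q2) * Hcoef p1 q1 r1 * Hcoef p2 q2 r2 \<noteq> 0"
    unfolding Tmul_def split_conv by (blast dest!: sum_nz)
  from nz have "u (p1, p2) \<noteq> 0" "v (q1, q2) \<noteq> 0" "Hcoef p1 q1 r1 \<noteq> (0::'k)" "Hcoef p2 q2 r2 \<noteq> (0::'k)"
    by simp_all
  moreover have "card (snd p1) + card (snd p2) = m" "card (snd q1) + card (snd q2) = m'"
    using u v \<open>u (p1, p2) \<noteq> 0\<close> \<open>v (q1, q2) \<noteq> 0\<close> unfolding supp_def by blast+
  ultimately show "card (snd r1) + card (snd r2) = m + m'"
    using mem by (auto dest!: Hcoef_nz)
qed

lemma ST_supp: "supp (card (snd p) + card (snd q)) (ST c p q)"
  by (auto simp: supp_def ST_def split: if_splits)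

lemma Tplus_supp: "supp m u \<Longrightarrow> supp m v \<Longrightarrow> supp m (Tplus u v)"
  unfolding supp_def Tplus_def by (metis add.left_neutral add.right_neutral)

lemma XX_supp: "supp 1 (XX i)"
  by (auto simp: supp_def XX_def Tplus_def ST_def split: if_splits)

lemma foldl_supp: "supp m u \<Longrightarrow> supp (m + length xs) (foldl (Tmul n) u (map XX xs))"
proof (induction xs arbitrary: u m)
  case Nil then show ?case by simp
next
  case (Cons x xs)
  have "supp (m + 1) (Tmul n u (XX x))" by (rule Tmul_supp[OF Cons.prems XX_supp])
  from Cons.IH[OF this] show ?case by simp
qed

lemma DB_supp: "supp (card S) (Delta_basis n (b, S))"
  unfolding DB_alt using foldl_supp[OF ST_supp[where p="(b, {})" and q="(b, {})" and c=1], where n=n and xs="sorted_list_of_set S"]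
  by simp

locale sc =
  fixes scale :: "'k::field \<Rightarrow> 'a::ring_1 \<Rightarrow> 'a"
  assumes alg: "is_algebra scale"
begin

lemma s_add_r: "scale c (x + y) = scale c x + scale c y" using alg by (simp add: is_algebra_def)
lemma s_add_l: "scale (c + d) x = scale c x + scale d x" using alg by (simp add: is_algebra_def)
lemma s_mult: "scale c (scale d x) = scale (c * d) x" using alg by (simp add: is_algebra_def)
lemma s_one[simp]: "scale 1 x = x" using alg by (simp add: is_algebra_def)
lemma s_mul1: "scale c (x * y) = scale c x * y" using alg unfolding is_algebra_def by blast
lemma s_mul2: "scale c (x * y) = x * scale c y" using alg unfolding is_algebra_def by blast
lemma s_zero_l[simp]: "scale 0 x = 0"
  using s_add_l[of 0 0 x] by simp
lemma s_zero_r[simp]: "scale c 0 = 0"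
  using s_add_r[of c 0 0] by simp
lemma s_neg1[simp]: "scale (-1) x = - x"
proof -
  have "scale (-1) x + scale 1 x = 0" using s_add_l[of "-1" 1 x, symmetric] by simp
  then show ?thesis by (simp add: eq_neg_iff_add_eq_0)
qed
lemma s_sum_l: "scale (sum f A) x = (\<Sum>i\<in>A. scale (f i) x)"
  by (induction A rule: infinite_finite_induct) (auto simp: s_add_l)
lemma s_sum_r: "scale c (sum f A) = (\<Sum>i\<in>A. scale c (f i))"
  by (induction A rule: infinite_finite_induct) (auto simp: s_add_r)
lemma s_comm: "scale c (scale d x) = scale d (scale c x)"
  by (simp add: s_mult mult.commute)

definition EV :: "nat \<Rightarrow> (hbasis \<Rightarrow> hbasis \<Rightarrow> 'a) \<Rightarrow> (hbasis \<times> hbasis \<Rightarrow> 'k) \<Rightarrow> 'a" where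
  "EV n F u = (\<Sum>p\<in>Hbasis n. \<Sum>q\<in>Hbasis n. scale (u (p, q)) (F p q))"

lemma EV_Tplus: "EV n F (Tplus u v) = EV n F u + EV n F v"
  by (simp add: EV_def Tplus_def s_add_l sum.distrib)

lemma EV_zero: "EV n F (\<lambda>_. 0) = 0"
  by (simp add: EV_def)

lemma EV_ST: assumes "p \<in> Hbasis n" "q \<in> Hbasis n" shows "EV n F (ST c p q) = scale c (F p q)"
proof -
  have "EV n F (ST c p q) = (\<Sum>q'\<in>Hbasis n. scale (ST c p q (p, q')) (F p q'))"
    unfolding EV_def by (rule sum_single) (auto simp: ST_def finite_Hbasis assms)
  also have "\<dots> = scale (ST c p q (p, q)) (F p q)"
    by (rule sum_single) (auto simp: ST_def finite_Hbasis assms)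
  finally show ?thesis by (simp add: ST_def)
qed

lemma EV_Delta: "EV n F (Delta n h) = (\<Sum>r\<in>Hbasis n. scale (h r) (EV n F (Delta_basis n r)))"
proof -
  have "EV n F (Delta n h) = (\<Sum>p\<in>Hbasis n. \<Sum>q\<in>Hbasis n. \<Sum>r\<in>Hbasis n.
      scale (h r) (scale (Delta_basis n r (p, q)) (F p q)))"
    by (simp add: EV_def Delta_def s_sum_l s_mult)
  also have "\<dots> = (\<Sum>p\<in>Hbasis n. \<Sum>r\<in>Hbasis n. \<Sum>q\<in>Hbasis n.
      scale (h r) (scale (Delta_basis n r (p, q)) (F p q)))"
    by (rule sum.cong[OF refl]) (rule sum.swap)
  also have "\<dots> = (\<Sum>r\<in>Hbasis n. \<Sum>p\<in>Hbasis n. \<Sum>q\<in>Hbasis n.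
      scale (h r) (scale (Delta_basis n r (p, q)) (F p q)))"
    by (rule sum.swap)
  also have "\<dots> = (\<Sum>r\<in>Hbasis n. scale (h r) (EV n F (Delta_basis n r)))"
    by (simp add: EV_def s_sum_r)
  finally show ?thesis .
qed

lemma EV_linF: "EV n (\<lambda>p q. \<Sum>x\<in>B. scale (k x) (G x p q)) u = (\<Sum>x\<in>B. scale (k x) (EV n (G x) u))"
proof -
  have "EV n (\<lambda>p q. \<Sum>x\<in>B. scale (k x) (G x p q)) u = (\<Sum>p\<in>Hbasis n. \<Sum>q\<in>Hbasis n. \<Sum>x\<in>B.
      scale (k x) (scale (u (p, q)) (G x p q)))"
    by (simp add: EV_def s_sum_r s_comm)
  also have "\<dots> = (\<Sum>p\<in>Hbasis n. \<Sum>x\<in>B. \<Sum>q\<in>Hbasis n.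
      scale (k x) (scale (u (p, q)) (G x p q)))"
    by (rule sum.cong[OF refl]) (rule sum.swap)
  also have "\<dots> = (\<Sum>x\<in>B. \<Sum>p\<in>Hbasis n. \<Sum>q\<in>Hbasis n.
      scale (k x) (scale (u (p, q)) (G x p q)))"
    by (rule sum.swap)
  also have "\<dots> = (\<Sum>x\<in>B. scale (k x) (EV n (G x) u))"
    by (simp add: EV_def s_sum_r)
  finally show ?thesis .
qed

lemma EV_supp:
  assumes "supp m u" "m \<ge> 3"
    and F0: "\<And>p q. p \<in> Hbasis n \<Longrightarrow> q \<in> Hbasis n \<Longrightarrow> card (snd p) \<ge> 2 \<or> card (snd q) \<ge> 2 \<Longrightarrow> F p q = 0"
  shows "EV n F u = 0"
  unfolding EV_def
proof (intro sum.neutral ballI)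
  fix p q assume pq: "p \<in> Hbasis n" "q \<in> Hbasis n"
  show "scale (u (p, q)) (F p q) = 0"
  proof (cases "u (p, q) = 0")
    case False
    then have "card (snd p) + card (snd q) = m" using assms(1) unfolding supp_def by blast
    then have "F p q = 0" using assms(2) by (intro F0[OF pq]) linarith
    then show ?thesis by simp
  qed simp
qed

end

definition Phi :: "(nat \<Rightarrow> 'a::ring_1) \<Rightarrow> hbasis \<Rightarrow> 'a \<Rightarrow> 'a" where
  "Phi c p a = (if snd p = {} then (if fst p then 0 else a)
      else if card (snd p) = 1 then c (the_elem (snd p)) * a else 0)"

lemma Phi_empty[simp]: "Phi c (b, {}) a = (if b then 0 else a)" by (simp add: Phi_def)
lemma Phi_single[simp]: "Phi c (b, {i}) a = c i * a" by (simp add: Phi_def)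
lemma Phi_big: "2 \<le> card S \<Longrightarrow> Phi c (b, S) a = 0" by (auto simp: Phi_def)
lemma Phi_big': "2 \<le> card (snd p) \<Longrightarrow> Phi c p a = 0" by (auto simp: Phi_def)

lemma shape:
  fixes S :: "nat set"
  assumes "finite S"
  obtains "S = {}" | i where "S = {i}" | i j where "i < j" "S = {i, j}" | "3 \<le> card S"
proof -
  consider "card S = 0" | "card S = 1" | "card S = 2" | "3 \<le> card S" by linarith
  then show ?thesis
  proof cases
    case 1 then show ?thesis using assms that by simp
  next
    case 2 then show ?thesis using that by (auto simp: card_1_singleton_iff)
  next
    case 3
    then obtain i j where "S = {i, j}" "i \<noteq> j" by (auto simp: card_2_iff)
    show ?thesis
    proof (cases "i < j")
      case True then show ?thesis using that(3) \<open>S = {i, j}\<close> by blast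
    next
      case False then have "j < i" using \<open>i \<noteq> j\<close> by simp
      then show ?thesis using that(3)[of j i] \<open>S = {i, j}\<close> by (simp add: insert_commute)
    qed
  qed (use that in auto)
qed

lemma shape2:
  fixes S :: "nat set"
  assumes "finite S"
  obtains "S = {}" | i where "S = {i}" | "2 \<le> card S"
proof (cases rule: shape[OF assms])
  case (3 i j) then show ?thesis using that(3) by simp
qed (use that in auto)

context sc
begin

definition Yf :: "(nat \<Rightarrow> 'a) \<Rightarrow> hbasis \<Rightarrow> hbasis \<Rightarrow> 'a \<Rightarrow> 'a" where
  "Yf c q q' a = (if snd q \<inter> snd q' = {} then scale (hs q q') (Phi c (hm q q') a) else 0)"

lemma Yf_big: "q \<in> Hbasis n \<Longrightarrow> q' \<in> Hbasis n \<Longrightarrow> 2 \<le> card (snd q) + card (snd q') \<Longrightarrow> Yf c q q' a = 0"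
proof -
  assume a: "q \<in> Hbasis n" "q' \<in> Hbasis n" "2 \<le> card (snd q) + card (snd q')"
  show ?thesis
  proof (cases "snd q \<inter> snd q' = {}")
    case True
    then have "card (snd (hm q q')) = card (snd q) + card (snd q')"
      using a by (simp add: hm_def card_Un_disjoint finite_snd)
    then have "Phi c (hm q q') a = 0" using a by (intro Phi_big') simp
    then show ?thesis by (simp add: Yf_def)
  qed (simp add: Yf_def)
qed

end

locale pa = sc scale for scale :: "'k::field \<Rightarrow> 'a::ring_1 \<Rightarrow> 'a" +
  fixes c :: "nat \<Rightarrow> 'a"
  assumes central: "c i * y = y * c i"
begin

lemma cc: "c i * x * (c j * y) = c j * c i * (x * y)"
proof -
  have "c i * x * (c j * y) = c i * (x * c j) * y" by (simp add: mult.assoc)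
  also have "\<dots> = c i * c j * (x * y)" by (simp add: central[of j x, symmetric] mult.assoc)
  also have "c i * c j = c j * c i" by (rule central)
  finally show ?thesis .
qed

lemma cc2: "c i * (c j * y) = c j * (c i * y)"
  by (simp add: mult.assoc[symmetric] central[of i "c j"])

lemma cond3_basis:
  assumes r: "(b, S) \<in> Hbasis n"
  shows "Phi c (b, S) (x * y) = EV n (\<lambda>p q. Phi c p x * Phi c q y) (Delta_basis n (b, S))"
proof -
  have fin: "finite S" using finite_snd[OF r] by simp
  show ?thesis
  using fin proof (cases rule: shape)
    case 1 then show ?thesis by (simp add: DB0 EV_ST)
  next
    case (2 i)
    then have i: "i \<in> {1..<n}" using r by simp
    show ?thesis
    proof (cases b)
      case True
      then show ?thesis using 2 i
        by (simp add: DB1 EV_Tplus EV_ST mult.assoc[symmetric] central[of i x])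
    next
      case False
      then show ?thesis using 2 i by (simp add: DB1 EV_Tplus EV_ST mult.assoc)
    qed
  next
    case (3 i j)
    then have ij: "i \<in> {1..<n}" "j \<in> {1..<n}" using r by auto
    show ?thesis using 3 ij
      by (simp add: DB2 EV_Tplus EV_ST Phi_big cc) (simp only: central[of i "c j"])
  next
    case 4
    then show ?thesis
      by (simp add: Phi_big) (rule EV_supp[OF DB_supp 4], auto simp: Phi_big')
  qed
qed


lemma cond4_basis:
  assumes r: "(b, S) \<in> Hbasis n" and q': "(e, Q) \<in> Hbasis n"
  shows "Phi c (b, S) (Phi c (e, Q) a) = EV n (\<lambda>p q. Phi c p 1 * Yf c q (e, Q) a) (Delta_basis n (b, S))"
proof -
  have fin: "finite S" using finite_snd[OF r] by simp
  have finQ: "finite Q" using finite_snd[OF q'] by simp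
  show ?thesis
  using fin proof (cases rule: shape)
    case 1 then show ?thesis by (cases b; cases e) (simp_all add: DB0 EV_ST Yf_def hs_def hm_def)
  next
    case (2 i)
    then have i: "i \<in> {1..<n}" using r by simp
    show ?thesis
    using finQ proof (cases rule: shape2)
      case 1 then show ?thesis using 2 i
        by (cases b; cases e) (simp_all add: DB1 EV_Tplus EV_ST Yf_def hs_def hm_def)
    next
      case (2 j)
      show ?thesis
      proof (cases "i = j")
        case True then show ?thesis using 2 \<open>S = {i}\<close> i
          by (cases b; cases e) (simp_all add: DB1 EV_Tplus EV_ST Yf_def hs_def hm_def)
      next
        case False
        have "Yf c (b, {i}) (e, Q) a = 0" by (rule Yf_big[OF _ q']) (use i 2 in auto)
        then show ?thesis using 2 \<open>S = {i}\<close> i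
          by (cases b; cases e) (simp_all add: DB1 EV_Tplus EV_ST Yf_def hs_def hm_def)
      qed
    next
      case 3
      have "Yf c (b, {i}) (e, Q) a = 0" by (rule Yf_big[OF _ q']) (use i 3 in auto)
      moreover have "Yf c (b, {}) (e, Q) a = 0" by (rule Yf_big[OF _ q']) (use i 3 in auto)
      ultimately show ?thesis using 3 \<open>S = {i}\<close> i
        by (simp add: DB1 EV_Tplus EV_ST Phi_big)
    qed
  next
    case (3 i j)
    then have ij: "i \<in> {1..<n}" "j \<in> {1..<n}" using r by auto
    have y2: "Yf c (b, {i, j}) (e, Q) a = 0" by (rule Yf_big[OF _ q']) (use ij 3 in auto)
    show ?thesis
    using finQ proof (cases rule: shape2)
      case 1 then show ?thesis using 3 ij y2
        by (cases e) (simp_all add: DB2 EV_Tplus EV_ST Phi_big Yf_def hs_def hm_def s_mul2[symmetric] cc2)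
    next
      case (2 k)
      have "Yf c (b, {i}) (e, Q) a = 0" by (rule Yf_big[OF _ q']) (use ij 2 in auto)
      moreover have "Yf c (b, {j}) (e, Q) a = 0" by (rule Yf_big[OF _ q']) (use ij 2 in auto)
      ultimately show ?thesis using 3 ij y2
        by (simp add: DB2 EV_Tplus EV_ST Phi_big)
    next
      case 4: 3
      have "Yf c (b, {i}) (e, Q) a = 0" by (rule Yf_big[OF _ q']) (use ij 4 in auto)
      moreover have "Yf c (b, {j}) (e, Q) a = 0" by (rule Yf_big[OF _ q']) (use ij 4 in auto)
      ultimately show ?thesis using 3 ij y2
        by (simp add: DB2 EV_Tplus EV_ST Phi_big)
    qed
  next
    case 4
    show ?thesis
      using 4 apply (simp add: Phi_big)
      apply (rule EV_supp[OF DB_supp 4])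
      apply (erule disjE)
       apply (simp add: Phi_big')
      apply (simp add: Yf_big[OF _ q'])
      done
  qed
qed

end


lemma Phi_sum: "Phi c p (sum f A) = (\<Sum>x\<in>A. Phi c p (f x))"
  by (simp add: Phi_def sum_distrib_left)

context sc
begin

lemma Phi_scale: "Phi c p (scale d x) = scale d (Phi c p x)"
  by (simp add: Phi_def s_mul2)

lemma Hmul_He_left: "q \<in> Hbasis n \<Longrightarrow> Hmul n (He q) k r = (\<Sum>q'\<in>Hbasis n. k q' * Hcoef q q' r)"
proof -
  assume q: "q \<in> Hbasis n"
  have "Hmul n (He q) k r = (\<Sum>p'\<in>Hbasis n. He q p' * (\<Sum>q'\<in>Hbasis n. k q' * Hcoef p' q' r))"
    unfolding Hmul_def sum_distrib_left by (intro sum.cong refl) (simp add: ac_simps)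
  then show ?thesis using q by (simp add: sum_He finite_Hbasis)
qed

lemma hm_Hbasis: "q \<in> Hbasis n \<Longrightarrow> q' \<in> Hbasis n \<Longrightarrow> hm q q' \<in> Hbasis n"
  by (cases q; cases q') (simp add: hm_def)

lemma sum_Hcoef:
  assumes "q \<in> Hbasis n" "q' \<in> Hbasis n"
  shows "(\<Sum>r\<in>Hbasis n. scale (Hcoef q q' r) (Phi c r a)) = Yf c q q' a"
proof (cases "snd q \<inter> snd q' = {}")
  case True
  have "(\<Sum>r\<in>Hbasis n. scale (Hcoef q q' r) (Phi c r a)) = scale (Hcoef q q' (hm q q')) (Phi c (hm q q') a)"
    by (rule sum_single) (auto simp: finite_Hbasis hm_Hbasis assms Hcoef_alt)
  then show ?thesis using True by (simp add: Hcoef_alt Yf_def)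
next
  case False
  then show ?thesis by (simp add: Hcoef_alt Yf_def)
qed

lemma act_Hmul:
  assumes ph: "\<forall>p\<in>Hbasis n. \<forall>a. phi p a = Phi c p a" and q: "q \<in> Hbasis n"
  shows "act n scale phi (Hmul n (He q) k) a = (\<Sum>q'\<in>Hbasis n. scale (k q') (Yf c q q' a))"
proof -
  have "act n scale phi (Hmul n (He q) k) a =
      (\<Sum>r\<in>Hbasis n. \<Sum>q'\<in>Hbasis n. scale (k q') (scale (Hcoef q q' r) (Phi c r a)))"
    unfolding act_def by (intro sum.cong refl) (simp add: ph Hmul_He_left[OF q] s_sum_l s_mult)
  also have "\<dots> = (\<Sum>q'\<in>Hbasis n. \<Sum>r\<in>Hbasis n. scale (k q') (scale (Hcoef q q' r) (Phi c r a)))"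
    by (rule sum.swap)
  also have "\<dots> = (\<Sum>q'\<in>Hbasis n. scale (k q') (Yf c q q' a))"
    by (intro sum.cong refl) (simp add: s_sum_r[symmetric] sum_Hcoef q)
  finally show ?thesis .
qed

lemma act_He: "p \<in> Hbasis n \<Longrightarrow> act n scale phi (He p) a = phi p a"
proof -
  assume p: "p \<in> Hbasis n"
  have "act n scale phi (He p) a = scale (He p p) (phi p a)"
    unfolding act_def by (rule sum_single) (auto simp: finite_Hbasis p He_def)
  then show ?thesis by (simp add: He_def)
qed

end

lemma Hprod_aux:
  "sorted_wrt (<) xs \<Longrightarrow> set xs \<subseteq> {1..<n} \<Longrightarrow> T \<subseteq> {1..<n} \<Longrightarrow> (\<forall>t\<in>T. \<forall>x\<in>set xs. t < x) \<Longrightarrow>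
   foldl (Hmul n) (He (False, T)) (map Hx xs) = (He (False, T \<union> set xs) :: _ \<Rightarrow> 'k::field)"
proof (induction xs arbitrary: T)
  case Nil then show ?case by simp
next
  case (Cons x xs)
  have "Hmul n (He (False, T)) (Hx x) = (He (False, insert x T) :: _ \<Rightarrow> 'k)"
  proof -
    have e: "{(s, t). s \<in> T \<and> t = x \<and> t < s} = {}" using Cons.prems(4) by auto
    have "x \<notin> T" using Cons.prems(4) by auto
    then show ?thesis using Cons.prems(2,3) unfolding Hx_def
      by (subst Hmul_He) (auto simp: Hcoef_alt hm_def hs_def He_def e intro!: ext)
  qed
  moreover have "foldl (Hmul n) (He (False, insert x T)) (map Hx xs) = (He (False, insert x T \<union> set xs) :: _ \<Rightarrow> 'k)"
    using Cons.prems by (intro Cons.IH) auto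
  ultimately show ?case by simp
qed

lemma Hprod_He:
  assumes "S \<subseteq> {1..<n}"
  shows "Hprod n (map Hx (sorted_list_of_set S)) = (He (False, S) :: _ \<Rightarrow> 'k::field)"
proof -
  have fin: "finite S" using assms by (rule finite_subset) simp
  show ?thesis unfolding Hprod_def Hone_def
    using Hprod_aux[of "sorted_list_of_set S" n "{}"] fin assms by simp
qed

lemma Hg_mul: "S \<subseteq> {1..<n} \<Longrightarrow> Hmul n Hg (He (False, S)) = (He (True, S) :: _ \<Rightarrow> 'k::field)"
  unfolding Hg_def by (subst Hmul_He) (auto simp: Hcoef_alt hm_def hs_def He_def intro!: ext)





theorem proposition4p4:
  fixes scale :: "'k::field \<Rightarrow> 'a::ring_1 \<Rightarrow> 'a"
    and phi :: "hbasis \<Rightarrow> 'a \<Rightarrow> 'a"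
    and n :: nat
  assumes char: "(2::'k) \<noteq> 0"
    and n2: "n \<ge> 2"
    and alg: "is_algebra scale"
    and lin: "linear_map_HA n scale phi"
    and one: "\<forall>a. act n scale phi Hone a = a"
    and g0: "\<forall>a. act n scale phi Hg a = 0"
    and central: "\<forall>i\<in>{1..<n}. \<forall>y. act n scale phi (Hx i) 1 * y = y * act n scale phi (Hx i) 1"
    and xi: "\<forall>i\<in>{1..<n}. \<forall>a.
              act n scale phi (Hmul n Hg (Hx i)) a = act n scale phi (Hx i) a \<and>
              act n scale phi (Hx i) a = act n scale phi (Hx i) 1 * a"
    and xs: "\<forall>is. length is \<ge> 2 \<longrightarrow> set is \<subseteq> {1..<n} \<longrightarrow> (\<forall>a.
              act n scale phi (Hmul n Hg (Hprod n (map Hx is))) a = act n scale phi (Hprod n (map Hx is)) a \<and>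
              act n scale phi (Hprod n (map Hx is)) a = 0)"
  shows "partial_action n scale phi"
proof -
  interpret sc scale by unfold_locales (rule alg)
  define c where "c i = (if i \<in> {1..<n} then act n scale phi (Hx i) 1 else 0)" for i
  have cen: "c i * y = y * c i" for i y using central by (simp add: c_def)
  interpret pa scale c by unfold_locales (rule cen)
  have ph: "\<forall>p\<in>Hbasis n. \<forall>a. phi p a = Phi c p a"
  proof (intro ballI allI)
    fix p a assume p: "p \<in> Hbasis n"
    obtain b S where pb: "p = (b, S)" by (cases p)
    have S: "S \<subseteq> {1..<n}" using p pb by simp
    have fin: "finite S" using S by (rule finite_subset) simp
    show "phi p a = Phi c p a"
    using fin proof (cases rule: shape2)
      case 1
      show ?thesis
      proof (cases b)
        case True
        then show ?thesis using g0 act_He[of "(True, {})" n phi a] 1 pb by (simp add: Hg_def)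
      next
        case False
        then show ?thesis using one act_He[of "(False, {})" n phi a] 1 pb by (simp add: Hone_def)
      qed
    next
      case (2 i)
      then have i: "i \<in> {1..<n}" using S by simp
      have e1: "act n scale phi (Hx i) a = act n scale phi (Hx i) 1 * a" using xi i by blast
      have e2: "act n scale phi (Hmul n Hg (Hx i)) a = act n scale phi (Hx i) a" using xi i by blast
      have hx: "act n scale phi (Hx i) x = phi (False, {i}) x" for x
        using act_He[of "(False, {i})" n phi x] i unfolding Hx_def by simp
      have ci: "act n scale phi (Hx i) 1 = c i" using i by (simp add: c_def)
      have x1: "phi (False, {i}) a = c i * a"
        using hx[of a] e1 ci by simp
      have gx: "Hmul n Hg (Hx i) = He (True, {i})" using Hg_mul[of "{i}" n] i by (simp add: Hx_def)
      have "phi (True, {i}) a = act n scale phi (He (True, {i})) a"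
        using act_He[of "(True, {i})" n phi a] i by simp
      also have "\<dots> = act n scale phi (Hmul n Hg (Hx i)) a" by (simp only: gx)
      also have "\<dots> = act n scale phi (Hx i) a" by (rule e2)
      also have "\<dots> = c i * a" using e1 ci by simp
      finally have x2: "phi (True, {i}) a = c i * a" .
      show ?thesis using x1 x2 2 pb by (cases b) simp_all
    next
      case 3
      let ?is = "sorted_list_of_set S"
      have len: "length ?is \<ge> 2" using 3 by simp
      have set: "set ?is \<subseteq> {1..<n}" using S fin by simp
      have hp: "Hprod n (map Hx ?is) = He (False, S)" by (rule Hprod_He[OF S])
      have "act n scale phi (Hmul n Hg (Hprod n (map Hx ?is))) a = act n scale phi (Hprod n (map Hx ?is)) a \<and>
            act n scale phi (Hprod n (map Hx ?is)) a = 0"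
        using xs[rule_format, OF len set] by blast
      then have z: "act n scale phi (He (True, S)) a = 0" "act n scale phi (He (False, S)) a = 0"
        by (simp_all add: hp Hg_mul[OF S])
      then have "phi (True, S) a = 0" "phi (False, S) a = 0" using S by (simp_all add: act_He)
      then show ?thesis using 3 pb Phi_big by (cases b) simp_all
    qed
  qed
  have c3: "\<forall>h\<in>Hspace n. \<forall>a b. act n scale phi h (a * b) =
        (\<Sum>p\<in>Hbasis n. \<Sum>q\<in>Hbasis n.
           scale (Delta n h (p, q)) (act n scale phi (He p) a * act n scale phi (He q) b))"
  proof (intro ballI allI)
    fix h :: "hbasis \<Rightarrow> 'k" and a b :: 'a
    have "(\<Sum>p\<in>Hbasis n. \<Sum>q\<in>Hbasis n.
           scale (Delta n h (p, q)) (act n scale phi (He p) a * act n scale phi (He q) b))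
        = EV n (\<lambda>p q. Phi c p a * Phi c q b) (Delta n h)"
      unfolding EV_def by (intro sum.cong refl) (simp add: act_He ph)
    also have "\<dots> = (\<Sum>r\<in>Hbasis n. scale (h r) (EV n (\<lambda>p q. Phi c p a * Phi c q b) (Delta_basis n r)))"
      by (rule EV_Delta)
    also have "\<dots> = (\<Sum>r\<in>Hbasis n. scale (h r) (phi r (a * b)))"
    proof (intro sum.cong refl)
      fix r assume r: "r \<in> Hbasis n"
      obtain b' S where rb: "r = (b', S)" by (cases r)
      show "scale (h r) (EV n (\<lambda>p q. Phi c p a * Phi c q b) (Delta_basis n r)) = scale (h r) (phi r (a * b))"
        using r ph cond3_basis[of b' S n a b] rb by simp
    qed
    also have "\<dots> = act n scale phi h (a * b)" by (simp add: act_def)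
    finally show "act n scale phi h (a * b) = (\<Sum>p\<in>Hbasis n. \<Sum>q\<in>Hbasis n.
           scale (Delta n h (p, q)) (act n scale phi (He p) a * act n scale phi (He q) b))" by simp
  qed
  have c4: "\<forall>h\<in>Hspace n. \<forall>k\<in>Hspace n. \<forall>a. act n scale phi h (act n scale phi k a) =
        (\<Sum>p\<in>Hbasis n. \<Sum>q\<in>Hbasis n.
           scale (Delta n h (p, q)) (act n scale phi (He p) 1 * act n scale phi (Hmul n (He q) k) a))"
  proof (intro ballI allI)
    fix h k :: "hbasis \<Rightarrow> 'k" and a :: 'a
    let ?F = "\<lambda>p q. \<Sum>q'\<in>Hbasis n. scale (k q') (Phi c p 1 * Yf c q q' a)"
    have "(\<Sum>p\<in>Hbasis n. \<Sum>q\<in>Hbasis n.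
           scale (Delta n h (p, q)) (act n scale phi (He p) 1 * act n scale phi (Hmul n (He q) k) a))
        = EV n ?F (Delta n h)"
      unfolding EV_def by (intro sum.cong refl) (simp add: act_He ph act_Hmul[OF ph] sum_distrib_left s_mul2)
    also have "\<dots> = (\<Sum>r\<in>Hbasis n. scale (h r) (EV n ?F (Delta_basis n r)))"
      by (rule EV_Delta)
    also have "\<dots> = (\<Sum>r\<in>Hbasis n. scale (h r) (phi r (act n scale phi k a)))"
    proof (intro sum.cong refl)
      fix r assume r: "r \<in> Hbasis n"
      obtain b' S where rb: "r = (b', S)" by (cases r)
      have "EV n ?F (Delta_basis n r) = (\<Sum>q'\<in>Hbasis n. scale (k q') (EV n (\<lambda>p q. Phi c p 1 * Yf c q q' a) (Delta_basis n r)))"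
        by (rule EV_linF)
      also have "\<dots> = (\<Sum>q'\<in>Hbasis n. scale (k q') (Phi c r (Phi c q' a)))"
      proof (intro sum.cong refl)
        fix q' assume q': "q' \<in> Hbasis n"
        obtain e Q where qe: "q' = (e, Q)" by (cases q')
        show "scale (k q') (EV n (\<lambda>p q. Phi c p 1 * Yf c q q' a) (Delta_basis n r)) = scale (k q') (Phi c r (Phi c q' a))"
          using cond4_basis[of b' S n e Q a] r q' rb qe by simp
      qed
      also have "\<dots> = phi r (act n scale phi k a)"
        using r by (simp add: ph act_def Phi_sum Phi_scale)
      finally show "scale (h r) (EV n ?F (Delta_basis n r)) = scale (h r) (phi r (act n scale phi k a))" by simp
    qed
    also have "\<dots> = act n scale phi h (act n scale phi k a)" by (simp add: act_def)
    finally show "act n scale phi h (act n scale phi k a) = (\<Sum>p\<in>Hbasis n. \<Sum>q\<in>Hbasis n.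
           scale (Delta n h (p, q)) (act n scale phi (He p) 1 * act n scale phi (Hmul n (He q) k) a))" by simp
  qed
  show ?thesis unfolding partial_action_def by (rule conjI[OF lin conjI[OF one conjI[OF c3 c4]]])
qed


end
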